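(* Let $G$ and $H$ be connected graphs of order at least two. If $\Delta(G_{\rm SR})\ge 2$ or $\Delta(H_{\rm SR})\ge 2$, then $O_{\rm SR}(G\,\square\, H)=\mathcal{B}$.
   Context: All graphs are finite, simple and undirected; $d(x,y)$ is the shortest-path distance and $\Delta$ denotes maximum degree. The Cartesian product $G\,\square\,H$ has vertex set $V(G)\times V(H)$, with $(u,w)$ adjacent to $(u',w')$ iff either $u=u'$ and $ww'\in E(H)$, or $w=w'$ and $uu'\in E(G)$. A set $S\subseteq V(X)$ is a strong resolving set of a connected graph $X$ if for all distinct $x,y\in V(X)$ there exists $z\in S$ such that $x$ lies on a $y$–$z$ geodesic or $y$ lies on an $x$–$z$ geodesic. A vertex $u$ is maximally distant from $v$ if $d(u,v)\ge d(w,v)$ for every neighbor $w$ of $u$; $u,v$ are mutually maximally distant (MMD) if each is maximally distant from the other. The strong resolving graph $X_{\rm SR}$ has vertex set $\{x: x\text{ is MMD with some }y\}$ and edges exactly the MMD pairs. The Maker–Breaker strong resolving game on $X$: Maker and Breaker alternately select a not-yet-chosen vertex of $X$; Maker wins if the vertices he selects contain a strong resolving set of $X$, Breaker wins otherwise. In the M-game Maker moves first, in the B-game Breaker moves first. $O_{\rm SR}(X)=\mathcal{M}$ if Maker has a winning strategy in both games, $\mathcal{B}$ if Breaker has a winning strategy in both, and $\mathcal{N}$ if the first player has a winning strategy in each. *)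

theory Defs
  imports Main
begin

definition simple_graph :: "'a set \<Rightarrow> ('a \<Rightarrow> 'a \<Rightarrow> bool) \<Rightarrow> bool" where
  "simple_graph V E \<longleftrightarrow> finite V \<and> (\<forall>x y. E x y \<longrightarrow> x \<in> V \<and> y \<in> V)
     \<and> (\<forall>x y. E x y \<longrightarrow> E y x) \<and> (\<forall>x. \<not> E x x)"

text \<open>A walk is a nonempty list of vertices with consecutive ones adjacent;
its length (number of edges) is length p - 1.\<close>

definition walk :: "'a set \<Rightarrow> ('a \<Rightarrow> 'a \<Rightarrow> bool) \<Rightarrow> 'a list \<Rightarrow> 'a \<Rightarrow> 'a \<Rightarrow> bool" where
  "walk V E p x y \<longleftrightarrow> p \<noteq> [] \<and> set p \<subseteq> V \<and> successively E p \<and> hd p = x \<and> last p = y"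

definition connected_graph :: "'a set \<Rightarrow> ('a \<Rightarrow> 'a \<Rightarrow> bool) \<Rightarrow> bool" where
  "connected_graph V E \<longleftrightarrow> simple_graph V E \<and> V \<noteq> {} \<and>
     (\<forall>x\<in>V. \<forall>y\<in>V. \<exists>p. walk V E p x y)"

definition dist :: "'a set \<Rightarrow> ('a \<Rightarrow> 'a \<Rightarrow> bool) \<Rightarrow> 'a \<Rightarrow> 'a \<Rightarrow> nat" where
  "dist V E x y = (LEAST n. \<exists>p. walk V E p x y \<and> length p = Suc n)"

definition geodesic :: "'a set \<Rightarrow> ('a \<Rightarrow> 'a \<Rightarrow> bool) \<Rightarrow> 'a list \<Rightarrow> 'a \<Rightarrow> 'a \<Rightarrow> bool" where
  "geodesic V E p y z \<longleftrightarrow> walk V E p y z \<and> length p = Suc (dist V E y z)"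

definition on_geodesic :: "'a set \<Rightarrow> ('a \<Rightarrow> 'a \<Rightarrow> bool) \<Rightarrow> 'a \<Rightarrow> 'a \<Rightarrow> 'a \<Rightarrow> bool" where
  "on_geodesic V E x y z \<longleftrightarrow> (\<exists>p. geodesic V E p y z \<and> x \<in> set p)"

definition strong_resolving_set :: "'a set \<Rightarrow> ('a \<Rightarrow> 'a \<Rightarrow> bool) \<Rightarrow> 'a set \<Rightarrow> bool" where
  "strong_resolving_set V E S \<longleftrightarrow> S \<subseteq> V \<and>
     (\<forall>x\<in>V. \<forall>y\<in>V. x \<noteq> y \<longrightarrow>
        (\<exists>z\<in>S. on_geodesic V E x y z \<or> on_geodesic V E y x z))"

definition maximally_distant :: "'a set \<Rightarrow> ('a \<Rightarrow> 'a \<Rightarrow> bool) \<Rightarrow> 'a \<Rightarrow> 'a \<Rightarrow> bool" where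
  "maximally_distant V E u v \<longleftrightarrow> u \<in> V \<and> v \<in> V \<and>
     (\<forall>w\<in>V. E u w \<longrightarrow> dist V E w v \<le> dist V E u v)"

definition mmd :: "'a set \<Rightarrow> ('a \<Rightarrow> 'a \<Rightarrow> bool) \<Rightarrow> 'a \<Rightarrow> 'a \<Rightarrow> bool" where
  "mmd V E u v \<longleftrightarrow> maximally_distant V E u v \<and> maximally_distant V E v u"

definition sr_vertices :: "'a set \<Rightarrow> ('a \<Rightarrow> 'a \<Rightarrow> bool) \<Rightarrow> 'a set" where
  "sr_vertices V E = {x\<in>V. \<exists>y\<in>V. y \<noteq> x \<and> mmd V E x y}"

definition sr_edges :: "'a set \<Rightarrow> ('a \<Rightarrow> 'a \<Rightarrow> bool) \<Rightarrow> 'a \<Rightarrow> 'a \<Rightarrow> bool" where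
  "sr_edges V E x y \<longleftrightarrow> x \<noteq> y \<and> mmd V E x y"

definition degree :: "'a set \<Rightarrow> ('a \<Rightarrow> 'a \<Rightarrow> bool) \<Rightarrow> 'a \<Rightarrow> nat" where
  "degree V E x = card {y\<in>V. E x y}"

definition max_degree :: "'a set \<Rightarrow> ('a \<Rightarrow> 'a \<Rightarrow> bool) \<Rightarrow> nat" where
  "max_degree V E = Max (insert 0 (degree V E ` V))"

definition cart_edges :: "('a \<Rightarrow> 'a \<Rightarrow> bool) \<Rightarrow> ('b \<Rightarrow> 'b \<Rightarrow> bool) \<Rightarrow> 'a \<times> 'b \<Rightarrow> 'a \<times> 'b \<Rightarrow> bool" where
  "cart_edges EG EH p q \<longleftrightarrow>
     (fst p = fst q \<and> EH (snd p) (snd q)) \<or> (snd p = snd q \<and> EG (fst p) (fst q))"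

text \<open>Position: set of free vertices F,
Maker's chosen vertices M, and whose turn it is. The game ends when the board
is exhausted (n counts remaining moves, always card F); Maker wins iff his
final set satisfies the (superset-closed) winning predicate W.
maker_wins: Maker has a winning strategy from the position;
breaker_wins: Breaker has a winning strategy from the position.\<close>

fun maker_wins :: "('a set \<Rightarrow> bool) \<Rightarrow> nat \<Rightarrow> 'a set \<Rightarrow> 'a set \<Rightarrow> bool \<Rightarrow> bool" where
  "maker_wins W 0 F M makers_turn = W M"
| "maker_wins W (Suc n) F M True = (\<exists>v\<in>F. maker_wins W n (F - {v}) (insert v M) False)"
| "maker_wins W (Suc n) F M False = (\<forall>v\<in>F. maker_wins W n (F - {v}) M True)"

fun breaker_wins :: "('a set \<Rightarrow> bool) \<Rightarrow> nat \<Rightarrow> 'a set \<Rightarrow> 'a set \<Rightarrow> bool \<Rightarrow> bool" where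
  "breaker_wins W 0 F M makers_turn = (\<not> W M)"
| "breaker_wins W (Suc n) F M True = (\<forall>v\<in>F. breaker_wins W n (F - {v}) (insert v M) False)"
| "breaker_wins W (Suc n) F M False = (\<exists>v\<in>F. breaker_wins W n (F - {v}) M True)"

text \<open>Maker-start game (M-game) and Breaker-start game (B-game) of the strong
resolving game on X = (V, E).\<close>

definition SR_win :: "'a set \<Rightarrow> ('a \<Rightarrow> 'a \<Rightarrow> bool) \<Rightarrow> 'a set \<Rightarrow> bool" where
  "SR_win V E M \<longleftrightarrow> (\<exists>S\<subseteq>M. strong_resolving_set V E S)"

datatype outcome = Outcome_M | Outcome_B | Outcome_N | Outcome_P

definition O_SR :: "'a set \<Rightarrow> ('a \<Rightarrow> 'a \<Rightarrow> bool) \<Rightarrow> outcome" where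
  "O_SR V E =
    (let mM = maker_wins (SR_win V E) (card V) V {} True;
         mB = maker_wins (SR_win V E) (card V) V {} False;
         bM = breaker_wins (SR_win V E) (card V) V {} True;
         bB = breaker_wins (SR_win V E) (card V) V {} False
     in if mM \<and> mB then Outcome_M
        else if bM \<and> bB then Outcome_B
        else if mM \<and> bB then Outcome_N
        else Outcome_P)"

end

theory Submission imports Defs begin

lemma walk_single: "x \<in> V \<Longrightarrow> walk V E [x] x x"
  by (simp add: walk_def)

lemma walk_Cons2: "walk V E (a # b # p) a c \<longleftrightarrow> a \<in> V \<and> E a b \<and> walk V E (b # p) b c"
  by (auto simp: walk_def)

lemma walk_ends: "walk V E p x y \<Longrightarrow> x \<in> V \<and> y \<in> V"
  unfolding walk_def by (metis hd_in_set last_in_set subsetD)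

lemma walk_append:
  assumes "walk V E p a b" "walk V E q b c"
  shows "walk V E (p @ tl q) a c"
proof -
  obtain q' where q: "q = b # q'" using assms(2) unfolding walk_def by (cases q) auto
  show ?thesis using assms unfolding walk_def q
    by (auto simp: successively_append_iff successively_Cons)
qed

lemma walk_rev:
  assumes "walk V E p a b" "\<forall>x y. E x y \<longrightarrow> E y x"
  shows "walk V E (rev p) b a"
  using assms unfolding walk_def
  by (auto simp: hd_rev last_rev elim!: successively_mono)

lemma dist_le: "walk V E p x y \<Longrightarrow> dist V E x y + 1 \<le> length p"
proof -
  assume w: "walk V E p x y"
  then have "p \<noteq> []" by (simp add: walk_def)
  then have "length p = Suc (length p - 1)" by simp
  with w have "dist V E x y \<le> length p - 1"
    unfolding dist_def by (metis (mono_tags, lifting) Least_le)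
  then show ?thesis using \<open>p \<noteq> []\<close> by (cases p) auto
qed

lemma dist_walk:
  assumes "walk V E p x y"
  shows "\<exists>q. walk V E q x y \<and> length q = Suc (dist V E x y)"
proof -
  have "\<exists>n. \<exists>q. walk V E q x y \<and> length q = Suc n"
    using assms by (metis Suc_pred length_greater_0_conv walk_def)
  then show ?thesis unfolding dist_def by (rule LeastI_ex)
qed

lemma dist_self: "x \<in> V \<Longrightarrow> dist V E x x = 0"
  using dist_le[OF walk_single, of x V E] by simp

lemma dist_zero: "walk V E p x y \<Longrightarrow> dist V E x y = 0 \<Longrightarrow> x = y"
  using dist_walk[of V E p x y] by (auto simp: walk_def length_Suc_conv)

lemma dist_sym:
  assumes "walk V E p a b" "\<forall>x y. E x y \<longrightarrow> E y x"
  shows "dist V E a b = dist V E b a"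
proof -
  obtain q where q: "walk V E q a b" "length q = Suc (dist V E a b)" using dist_walk[OF assms(1)] by blast
  have r: "walk V E (rev p) b a" using walk_rev[OF assms] .
  obtain q' where q': "walk V E q' b a" "length q' = Suc (dist V E b a)" using dist_walk[OF r] by blast
  have "dist V E b a + 1 \<le> length q" using dist_le[OF walk_rev[OF q(1) assms(2)]] by simp
  moreover have "dist V E a b + 1 \<le> length q'" using dist_le[OF walk_rev[OF q'(1) assms(2)]] by simp
  ultimately show ?thesis using q q' by simp
qed

lemma dist_step:
  assumes "E u u'" "u \<in> V" "walk V E p u' v"
  shows "dist V E u v \<le> dist V E u' v + 1"
proof -
  obtain q where q: "walk V E q u' v" "length q = Suc (dist V E u' v)" using dist_walk[OF assms(3)] by blast
  then obtain q' where "q = u' # q'" unfolding walk_def by (cases q) auto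
  then have "walk V E (u # q) u v" using q assms by (auto simp: walk_def)
  from dist_le[OF this] q show ?thesis by simp
qed


lemma geo_helper:
  assumes og: "on_geodesic V E p q z" and pq: "p \<noteq> q" and pz: "p \<noteq> z"
    and md: "maximally_distant V E p q" and sym: "\<forall>x y. E x y \<longrightarrow> E y x"
  shows False
proof -
  obtain P where wP: "walk V E P q z" and lP: "length P = Suc (dist V E q z)" and pP: "p \<in> set P"
    using og unfolding on_geodesic_def geodesic_def by blast
  obtain i where i: "i < length P" "P ! i = p" using pP by (metis in_set_conv_nth)
  have ne: "P \<noteq> []" using wP by (simp add: walk_def)
  have "hd P = q" using wP by (simp add: walk_def)
  then have "i \<noteq> 0" using i pq ne by (metis hd_conv_nth)
  have "last P = z" using wP by (simp add: walk_def)
  then have si: "Suc i < length P" using i pz ne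
    by (metis Suc_lessI diff_Suc_1 last_conv_nth)
  define w where "w = P ! Suc i"
  have Epw: "E p w" using wP si i unfolding w_def walk_def by (metis successively_nth)
  have wV: "w \<in> V" using wP si unfolding w_def walk_def by (meson nth_mem subsetD)
  have PP: "P = take (Suc i) P @ drop (Suc i) P" by simp
  have wt: "walk V E (take (Suc i) P) q p"
  proof -
    have "successively E (take (Suc i) P)" using wP PP unfolding walk_def
      by (metis successively_append_iff)
    moreover have "set (take (Suc i) P) \<subseteq> V" using wP unfolding walk_def
      by (meson order_trans set_take_subset)
    moreover have "hd (take (Suc i) P) = q" using \<open>hd P = q\<close> ne by (simp add: hd_take)
    moreover have "last (take (Suc i) P) = p" using i by (simp add: take_Suc_conv_app_nth)
    ultimately show ?thesis unfolding walk_def using ne by simp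
  qed
  have wd: "walk V E (drop (Suc i) P) w z"
  proof -
    have "successively E (drop (Suc i) P)" using wP PP unfolding walk_def
      by (metis successively_append_iff)
    moreover have "set (drop (Suc i) P) \<subseteq> V" using wP unfolding walk_def
      by (meson order_trans set_drop_subset)
    moreover have "hd (drop (Suc i) P) = w" using si by (simp add: hd_drop_conv_nth w_def)
    moreover have "last (drop (Suc i) P) = z" using si \<open>last P = z\<close> by simp
    ultimately show ?thesis unfolding walk_def using si by simp
  qed
  have d1: "dist V E q p \<le> i" using dist_le[OF wt] i by simp
  have wqw: "walk V E (take (Suc (Suc i)) P) q w"
  proof -
    have PP2: "P = take (Suc (Suc i)) P @ drop (Suc (Suc i)) P" by simp
    have "successively E (take (Suc (Suc i)) P)" using wP PP2 unfolding walk_def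
      by (metis successively_append_iff)
    moreover have "set (take (Suc (Suc i)) P) \<subseteq> V" using wP unfolding walk_def
      by (meson order_trans set_take_subset)
    moreover have "hd (take (Suc (Suc i)) P) = q" using \<open>hd P = q\<close> ne by (simp add: hd_take)
    moreover have "last (take (Suc (Suc i)) P) = w" using si by (simp add: take_Suc_conv_app_nth w_def)
    ultimately show ?thesis unfolding walk_def using ne by simp
  qed
  have d2: "dist V E q w \<ge> Suc i"
  proof (rule ccontr)
    assume "\<not> ?thesis"
    then have lt: "dist V E q w \<le> i" by simp
    obtain R where R: "walk V E R q w" "length R = Suc (dist V E q w)"
      using dist_walk[OF wqw] by blast
    have "walk V E (R @ tl (drop (Suc i) P)) q z" using walk_append[OF R(1) wd] .
    from dist_le[OF this] have "dist V E q z + 1 \<le> length R + (length P - Suc i - 1)" by simp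
    then show False using lt R(2) lP si by simp
  qed
  have "dist V E w q \<le> dist V E p q" using md Epw wV unfolding maximally_distant_def by blast
  moreover have "dist V E w q = dist V E q w" using dist_sym[OF wqw sym] by simp
  moreover have "dist V E p q = dist V E q p" using dist_sym[OF wt sym] by simp
  ultimately show False using d1 d2 by simp
qed

lemma sr_contains:
  assumes S: "strong_resolving_set V E S" and m: "mmd V E p q" and pq: "p \<noteq> q"
    and sym: "\<forall>x y. E x y \<longrightarrow> E y x"
  shows "p \<in> S \<or> q \<in> S"
proof (rule ccontr)
  assume n: "\<not> ?thesis"
  have V: "p \<in> V" "q \<in> V" using m by (auto simp: mmd_def maximally_distant_def)
  then obtain z where z: "z \<in> S" "on_geodesic V E p q z \<or> on_geodesic V E q p z"
    using S pq unfolding strong_resolving_set_def by blast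
  have "p \<noteq> z" "q \<noteq> z" using n z by auto
  then show False using z(2) geo_helper[of V E p q z] geo_helper[of V E q p z] m pq sym
    unfolding mmd_def by metis
qed

lemma conn_walk: "connected_graph V E \<Longrightarrow> x \<in> V \<Longrightarrow> y \<in> V \<Longrightarrow> \<exists>p. walk V E p x y"
  by (simp add: connected_graph_def)

lemma prod_walk_lower:
  assumes G: "connected_graph VG EG" and H: "connected_graph VH EH"
  shows "walk (VG \<times> VH) (cart_edges EG EH) P a b \<Longrightarrow>
    dist VG EG (fst a) (fst b) + dist VH EH (snd a) (snd b) + 1 \<le> length P"
proof (induction P arbitrary: a)
  case Nil
  then show ?case by (simp add: walk_def)
next
  case (Cons c P)
  show ?case
  proof (cases P)
    case Nil
    then have "a = b" "a \<in> VG \<times> VH" using Cons.prems by (auto simp: walk_def)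
    then have "fst a \<in> VG" "snd a \<in> VH" by auto
    then show ?thesis using Nil dist_self[of "fst a" VG EG] dist_self[of "snd a" VH EH] \<open>a = b\<close> by simp
  next
    case (Cons d P')
    have ac: "a = c" using Cons.prems by (simp add: walk_def)
    have wc: "walk (VG \<times> VH) (cart_edges EG EH) (a # d # P') a b"
      using Cons.prems ac \<open>P = d # P'\<close> by simp
    have w0: "a \<in> VG \<times> VH \<and> cart_edges EG EH a d \<and> walk (VG \<times> VH) (cart_edges EG EH) (d # P') d b"
      using walk_Cons2[THEN iffD1, OF wc] .
    then have w: "a \<in> VG \<times> VH" "cart_edges EG EH a d" "walk (VG \<times> VH) (cart_edges EG EH) P d b"
      using \<open>P = d # P'\<close> by auto
    have IH: "dist VG EG (fst d) (fst b) + dist VH EH (snd d) (snd b) + 1 \<le> length P"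
      using Cons.IH[OF w(3)] .
    have bV: "b \<in> VG \<times> VH" "d \<in> VG \<times> VH" using walk_ends[OF w(3)] by auto
    from w(2) consider "fst a = fst d" "EH (snd a) (snd d)" | "snd a = snd d" "EG (fst a) (fst d)"
      unfolding cart_edges_def by blast
    then show ?thesis
    proof cases
      case 1
      obtain pp where "walk VH EH pp (snd d) (snd b)" using conn_walk[OF H] bV by force
      from dist_step[OF 1(2) _ this] w(1) have "dist VH EH (snd a) (snd b) \<le> dist VH EH (snd d) (snd b) + 1"
        by force
      then show ?thesis using IH 1 by simp
    next
      case 2
      obtain pp where "walk VG EG pp (fst d) (fst b)" using conn_walk[OF G] bV by force
      from dist_step[OF 2(2) _ this] w(1) have "dist VG EG (fst a) (fst b) \<le> dist VG EG (fst d) (fst b) + 1"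
        by force
      then show ?thesis using IH 2 by simp
    qed
  qed
qed

lemma walk_map:
  assumes "walk V E p a b" "\<And>x. x \<in> V \<Longrightarrow> f x \<in> V'" "\<And>x y. E x y \<Longrightarrow> E' (f x) (f y)"
  shows "walk V' E' (map f p) (f a) (f b)"
  using assms unfolding walk_def
  by (auto simp: successively_map hd_map last_map elim!: successively_mono)

lemma prod_dist:
  assumes G: "connected_graph VG EG" and H: "connected_graph VH EH"
    and "u \<in> VG" "v \<in> VG" "x \<in> VH" "y \<in> VH"
  shows "dist (VG \<times> VH) (cart_edges EG EH) (u, x) (v, y) = dist VG EG u v + dist VH EH x y"
proof -
  obtain pG where pG: "walk VG EG pG u v" "length pG = Suc (dist VG EG u v)"
    using conn_walk[OF G] dist_walk assms by metis
  obtain pH where pH: "walk VH EH pH x y" "length pH = Suc (dist VH EH x y)"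
    using conn_walk[OF H] dist_walk assms by metis
  have w1: "walk (VG \<times> VH) (cart_edges EG EH) (map (\<lambda>g. (g, x)) pG) (u, x) (v, x)"
    using walk_map[OF pG(1), of "\<lambda>g. (g, x)" "VG \<times> VH" "cart_edges EG EH"] assms
    by (auto simp: cart_edges_def)
  have w2: "walk (VG \<times> VH) (cart_edges EG EH) (map (\<lambda>h. (v, h)) pH) (v, x) (v, y)"
    using walk_map[OF pH(1), of "\<lambda>h. (v, h)" "VG \<times> VH" "cart_edges EG EH"] assms
    by (auto simp: cart_edges_def)
  have w: "walk (VG \<times> VH) (cart_edges EG EH) (map (\<lambda>g. (g, x)) pG @ tl (map (\<lambda>h. (v, h)) pH)) (u, x) (v, y)"
    using walk_append[OF w1 w2] .
  have le: "dist (VG \<times> VH) (cart_edges EG EH) (u, x) (v, y) \<le> dist VG EG u v + dist VH EH x y"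
    using dist_le[OF w] pG(2) pH(2) by simp
  obtain P where "walk (VG \<times> VH) (cart_edges EG EH) P (u, x) (v, y)"
    "length P = Suc (dist (VG \<times> VH) (cart_edges EG EH) (u, x) (v, y))"
    using dist_walk[OF w] by blast
  from prod_walk_lower[OF G H this(1)] this(2) le show ?thesis by simp
qed

lemma prod_mmd:
  assumes G: "connected_graph VG EG" and H: "connected_graph VH EH"
    and m1: "mmd VG EG u v" and m2: "mmd VH EH x y"
  shows "mmd (VG \<times> VH) (cart_edges EG EH) (u, x) (v, y)"
proof -
  have md: "maximally_distant (VG \<times> VH) (cart_edges EG EH) (u, x) (v, y)"
    if G: "connected_graph VG EG" and H: "connected_graph VH EH"
    and m1: "maximally_distant VG EG u v" and m2: "maximally_distant VH EH x y"
    for VG :: "'c set" and EG VH and EH :: "'d \<Rightarrow> 'd \<Rightarrow> bool" and u v x y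
  proof -
    have V: "u \<in> VG" "v \<in> VG" "x \<in> VH" "y \<in> VH" using m1 m2 by (auto simp: maximally_distant_def)
    show ?thesis unfolding maximally_distant_def
    proof (intro conjI ballI impI)
      fix w assume wV: "w \<in> VG \<times> VH" and e: "cart_edges EG EH (u, x) w"
      obtain w1 w2 where ww: "w = (w1, w2)" by (cases w)
      have d: "dist (VG \<times> VH) (cart_edges EG EH) w (v, y) = dist VG EG w1 v + dist VH EH w2 y"
        using prod_dist[OF G H] wV V ww by auto
      have d0: "dist (VG \<times> VH) (cart_edges EG EH) (u, x) (v, y) = dist VG EG u v + dist VH EH x y"
        using prod_dist[OF G H] V by auto
      from e ww consider "w1 = u" "EH x w2" | "w2 = x" "EG u w1" unfolding cart_edges_def by auto
      then show "dist (VG \<times> VH) (cart_edges EG EH) w (v, y) \<le> dist (VG \<times> VH) (cart_edges EG EH) (u, x) (v, y)"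
      proof cases
        case 1 then show ?thesis using m2 d d0 wV ww unfolding maximally_distant_def by auto
      next
        case 2 then show ?thesis using m1 d d0 wV ww unfolding maximally_distant_def by auto
      qed
    qed (use V in auto)
  qed
  show ?thesis using md[OF G H] m1 m2 unfolding mmd_def by blast
qed


lemma exists_mmd:
  assumes G: "connected_graph V E" and c: "card V \<ge> 2"
  shows "\<exists>u v. u \<noteq> v \<and> mmd V E u v"
proof -
  have fin: "finite V" using G by (simp add: connected_graph_def simple_graph_def)
  obtain a b where ab: "a \<in> V" "b \<in> V" "a \<noteq> b"
  proof -
    have "\<not> card V \<le> Suc 0" using c by simp
    then show ?thesis using card_le_Suc0_iff_eq[OF fin] that by blast
  qed
  let ?f = "\<lambda>(s, t). dist V E s t"
  let ?m = "Max (?f ` (V \<times> V))"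
  have fin2: "finite (?f ` (V \<times> V))" using fin by simp
  have "?m \<in> ?f ` (V \<times> V)" using fin2 ab by (intro Max_in) auto
  then obtain u v where uv: "u \<in> V" "v \<in> V" "dist V E u v = ?m" by auto
  have ge: "dist V E s t \<le> ?m" if "s \<in> V" "t \<in> V" for s t
    using Max_ge[OF fin2, of "dist V E s t"] that by force
  obtain p where "walk V E p a b" using conn_walk[OF G] ab by blast
  then have "dist V E a b \<noteq> 0" using dist_zero ab by metis
  then have "?m > 0" using ge[OF ab(1,2)] by simp
  then have "u \<noteq> v" using uv dist_self[OF uv(1), of E] by auto
  moreover have "mmd V E u v"
  proof -
    have sym: "\<forall>x y. E x y \<longrightarrow> E y x" using G by (simp add: connected_graph_def simple_graph_def)
    obtain p where "walk V E p u v" using conn_walk[OF G] uv by blast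
    then have "dist V E v u = dist V E u v" using dist_sym sym by metis
    then show ?thesis unfolding mmd_def maximally_distant_def using uv ge by auto
  qed
  ultimately show ?thesis by blast
qed

lemma deg_extract:
  assumes G: "connected_graph V E" and d: "max_degree (sr_vertices V E) (sr_edges V E) \<ge> 2"
  shows "\<exists>a b c. b \<noteq> c \<and> sr_edges V E a b \<and> sr_edges V E a c"
proof -
  have fin: "finite (sr_vertices V E)" using G
    by (metis (no_types, lifting) connected_graph_def mem_Collect_eq rev_finite_subset simple_graph_def sr_vertices_def subsetI)
  let ?S = "insert 0 (degree (sr_vertices V E) (sr_edges V E) ` sr_vertices V E)"
  have "Max ?S \<in> ?S" using fin by (intro Max_in) auto
  then obtain a where a: "degree (sr_vertices V E) (sr_edges V E) a \<ge> 2"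
    using d unfolding max_degree_def by auto
  let ?N = "{y \<in> sr_vertices V E. sr_edges V E a y}"
  have finN: "finite ?N" using fin by simp
  have cN: "card ?N \<ge> 2" using a by (simp add: degree_def)
  obtain b c where "b \<in> ?N" "c \<in> ?N" "b \<noteq> c"
  proof -
    have "\<not> card ?N \<le> Suc 0" using cN by simp
    then show ?thesis using card_le_Suc0_iff_eq[OF finN] that by blast
  qed
  then show ?thesis by blast
qed

definition blk :: "('a set \<Rightarrow> bool) \<Rightarrow> 'a \<Rightarrow> 'a \<Rightarrow> bool" where
  "blk W p q \<longleftrightarrow> (\<forall>M. W M \<longrightarrow> p \<in> M \<or> q \<in> M)"

lemma game_L1:
  assumes "blk W p q"
  shows "finite F \<Longrightarrow> n = card F \<Longrightarrow> p \<notin> M \<Longrightarrow> q \<notin> M \<Longrightarrow> p \<notin> F \<Longrightarrow> q \<notin> F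
    \<Longrightarrow> breaker_wins W n F M b"
proof (induction n arbitrary: F M b)
  case 0
  then show ?case using assms by (auto simp: blk_def)
next
  case (Suc n F M b)
  show ?case
  proof (cases b)
    case True
    have "breaker_wins W n (F - {v}) (insert v M) False" if "v \<in> F" for v
      using Suc.prems that by (intro Suc.IH) auto
    then show ?thesis using True by simp
  next
    case False
    obtain v where v: "v \<in> F" using Suc.prems by (metis card.empty ex_in_conv nat.simps(3))
    have "breaker_wins W n (F - {v}) M True"
      using Suc.prems v by (intro Suc.IH) auto
    then show ?thesis using False v by auto
  qed
qed

lemma game_L2:
  assumes "finite F" "n = card F" "p \<in> F" "q1 \<in> F" "q2 \<in> F" "p \<noteq> q1" "p \<noteq> q2" "q1 \<noteq> q2"
    "p \<notin> M" "q1 \<notin> M" "q2 \<notin> M" "blk W p q1" "blk W p q2"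
  shows "breaker_wins W n F M False"
proof -
  obtain m where m: "n = Suc m" "m = card (F - {p})" using assms by (metis card_Suc_Diff1)
  have "{q1, q2} \<subseteq> F - {p}" using assms by auto
  then have "card {q1, q2} \<le> card (F - {p})" using assms(1) by (intro card_mono) auto
  then have "card (F - {p}) \<ge> 2" using assms(8) by simp
  then obtain k where k: "m = Suc k" using m by (metis Suc_1 Suc_le_D)
  have "breaker_wins W k (F - {p} - {v}) (insert v M) False" if v: "v \<in> F - {p}" for v
  proof -
    define q where "q = (if v = q1 then q2 else q1)"
    have q: "q \<in> F - {p} - {v}" "q \<noteq> p" "q \<notin> insert v M" "blk W p q"
      using assms q_def by auto
    obtain j where j: "k = Suc j" "j = card (F - {p} - {v} - {q})"
      using q(1) k m v assms(1) by (metis card_Suc_Diff1 finite_Diff Suc_inject)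
    have "breaker_wins W j (F - {p} - {v} - {q}) (insert v M) True"
      by (rule game_L1[OF q(4)]) (use j assms v q in auto)
    then show ?thesis using j q(1) by auto
  qed
  then have "breaker_wins W m (F - {p}) M True" using k by simp
  then show ?thesis using m assms(3) by auto
qed

lemma game_L3:
  assumes "finite F" "n = card F" "distinct [p1, q11, q12, p2, q21, q22]"
    "{p1, q11, q12, p2, q21, q22} \<subseteq> F" "{p1, q11, q12, p2, q21, q22} \<inter> M = {}"
    "blk W p1 q11" "blk W p1 q12" "blk W p2 q21" "blk W p2 q22"
  shows "breaker_wins W n F M True"
proof -
  obtain m where m: "n = Suc m" using assms by (metis card_Suc_Diff1 insert_subset)
  have "breaker_wins W m (F - {v}) (insert v M) False" if v: "v \<in> F" for v
  proof -
    have cm: "m = card (F - {v})" using m assms v by simp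
    show ?thesis
    proof (cases "v \<in> {p1, q11, q12}")
      case True
      then show ?thesis using game_L2[OF _ cm, of p2 q21 q22] assms by auto
    next
      case False
      then show ?thesis using game_L2[OF _ cm, of p1 q11 q12] assms by auto
    qed
  qed
  then show ?thesis using m by simp
qed

lemma breaker_not_maker: "breaker_wins W n F M t \<Longrightarrow> \<not> maker_wins W n F M t"
  by (induction n arbitrary: F M t) (case_tac t; auto)+


lemma final_game:
  assumes "finite V" "distinct [p1, q11, q12, p2, q21, q22]"
    "{p1, q11, q12, p2, q21, q22} \<subseteq> V"
    "blk (SR_win V E) p1 q11" "blk (SR_win V E) p1 q12" "blk (SR_win V E) p2 q21" "blk (SR_win V E) p2 q22"
  shows "O_SR V E = Outcome_B"
proof -
  have bM: "breaker_wins (SR_win V E) (card V) V {} True"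
    using game_L3[of V "card V" p1 q11 q12 p2 q21 q22 "{}"] assms by auto
  have bB: "breaker_wins (SR_win V E) (card V) V {} False"
    using game_L2[of V "card V" p1 q11 q12 "{}"] assms by auto
  have "\<not> maker_wins (SR_win V E) (card V) V {} True" using breaker_not_maker[OF bM] .
  then show ?thesis using bM bB unfolding O_SR_def Let_def by simp
qed

lemma blk_mmd:
  assumes sym: "\<forall>x y. E x y \<longrightarrow> E y x" and "mmd V E p q" "p \<noteq> q"
  shows "blk (SR_win V E) p q"
proof -
  show ?thesis unfolding blk_def SR_win_def
  proof (intro allI impI)
    fix M assume "\<exists>S\<subseteq>M. strong_resolving_set V E S"
    then obtain S where "S \<subseteq> M" "strong_resolving_set V E S" by blast
    then show "p \<in> M \<or> q \<in> M" using sr_contains[OF _ assms(2,3) sym] by blast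
  qed
qed

lemma mmd_sym: "mmd V E p q \<Longrightarrow> mmd V E q p"
  by (auto simp: mmd_def)

lemma mmd_in: "mmd V E p q \<Longrightarrow> p \<in> V \<and> q \<in> V"
  by (auto simp: mmd_def maximally_distant_def)

theorem mainTheorem13:
  fixes VG :: "'a set" and EG :: "'a \<Rightarrow> 'a \<Rightarrow> bool"
    and VH :: "'b set" and EH :: "'b \<Rightarrow> 'b \<Rightarrow> bool"
  assumes "connected_graph VG EG" and "card VG \<ge> 2"
    and "connected_graph VH EH" and "card VH \<ge> 2"
    and "max_degree (sr_vertices VG EG) (sr_edges VG EG) \<ge> 2
         \<or> max_degree (sr_vertices VH EH) (sr_edges VH EH) \<ge> 2"
  shows "O_SR (VG \<times> VH) (cart_edges EG EH) = Outcome_B"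
proof -
  note G = assms(1) and H = assms(3)
  have sG: "simple_graph VG EG" and sH: "simple_graph VH EH"
    using G H by (auto simp: connected_graph_def)
  have fin: "finite (VG \<times> VH)" using sG sH by (simp add: simple_graph_def)
  have sX: "\<forall>x y. cart_edges EG EH x y \<longrightarrow> cart_edges EG EH y x"
    using sG sH unfolding simple_graph_def cart_edges_def by auto
  have B: "blk (SR_win (VG \<times> VH) (cart_edges EG EH)) (u, x) (v, y)"
    if "mmd VG EG u v" "mmd VH EH x y" "(u, x) \<noteq> (v, y)" for u v x y
    using blk_mmd[OF sX prod_mmd[OF G H that(1,2)] that(3)] .
  from assms(5) show ?thesis
  proof
    assume "max_degree (sr_vertices VG EG) (sr_edges VG EG) \<ge> 2"
    then obtain a b c where abc: "b \<noteq> c" "sr_edges VG EG a b" "sr_edges VG EG a c"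
      using deg_extract[OF G] by blast
    obtain x y where xy: "x \<noteq> y" "mmd VH EH x y" using exists_mmd[OF H assms(4)] by blast
    have m: "mmd VG EG a b" "mmd VG EG a c" "a \<noteq> b" "a \<noteq> c" using abc by (auto simp: sr_edges_def)
    show ?thesis
      apply (rule final_game[OF fin, of "(a,x)" "(b,y)" "(c,y)" "(a,y)" "(b,x)" "(c,x)"])
      using abc xy m mmd_in[OF m(1)] mmd_in[OF m(2)] mmd_in[OF xy(2)]
        B[OF m(1) xy(2)] B[OF m(2) xy(2)] B[OF m(1) mmd_sym[OF xy(2)]] B[OF m(2) mmd_sym[OF xy(2)]]
      by auto
  next
    assume "max_degree (sr_vertices VH EH) (sr_edges VH EH) \<ge> 2"
    then obtain a b c where abc: "b \<noteq> c" "sr_edges VH EH a b" "sr_edges VH EH a c"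
      using deg_extract[OF H] by blast
    obtain x y where xy: "x \<noteq> y" "mmd VG EG x y" using exists_mmd[OF G assms(2)] by blast
    have m: "mmd VH EH a b" "mmd VH EH a c" "a \<noteq> b" "a \<noteq> c" using abc by (auto simp: sr_edges_def)
    show ?thesis
      apply (rule final_game[OF fin, of "(x,a)" "(y,b)" "(y,c)" "(y,a)" "(x,b)" "(x,c)"])
      using abc xy m mmd_in[OF m(1)] mmd_in[OF m(2)] mmd_in[OF xy(2)]
        B[OF xy(2) m(1)] B[OF xy(2) m(2)] B[OF mmd_sym[OF xy(2)] m(1)] B[OF mmd_sym[OF xy(2)] m(2)]
      by auto
  qed
qed

end
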